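(* Let $n\ge 5$ be even and let $x,y$ be adjacent vertices of $Q_n$ with $f_n(x)+f_n(y)=\operatorname{str}_{f_n}(Q_n)$. If $x$ and $y$ both begin with $11$, then $$\operatorname{str}_{f_n}(Q_n)\le \operatorname{str}_{f_{n-2}}(Q_{n-2})+3\cdot 2^{n-2}+\binom{n-3}{\lceil (n-3)/2\rceil}+\binom{n-2}{\lceil (n-2)/2\rceil}.$$
   Context: $Q_n$ is the $n$-dimensional hypercube: vertices are the $n$-bit strings, adjacent iff they differ in exactly one position. For a bijection $f:V(G)\to\{1,\dots,|V(G)|\}$, $\operatorname{str}_f(G)=\max\{f(u)+f(v):uv\in E(G)\}$. An $n$-bit string is $x_1\cdots x_n$, $x_i\in\{0,1\}$; its weight is its number of $1$s. Lexicographic order: $x<y$ if for some $k$, $x_j=y_j$ for $j<k$ and $x_k<y_k$. $S_n^i$ is the sequence of $n$-bit strings of weight $i$ in increasing lexicographic order; $R_n^i$ is the same set in decreasing lexicographic order. $S_n$ is the concatenation $(R_n^1,R_n^3,\dots,R_n^{n-1},S_n^n,S_n^{n-2},\dots,S_n^2,S_n^0)$ for even $n$ and $(R_n^1,R_n^3,\dots,R_n^{n-2},R_n^n,S_n^{n-1},\dots,S_n^2,S_n^0)$ for odd $n$; $f_n$ maps the string in position $j$ of $S_n$ to $j$. *)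

theory Defs
  imports Complex_Main "HOL-Library.List_Lexorder"
begin

text \<open>n-bit strings are lists of booleans (False = 0, True = 1) of length n.
  The order on lists from List_Lexorder is the lexicographic order, with False < True.\<close>

definition weight :: "bool list \<Rightarrow> nat" where
  "weight x = length (filter id x)"

definition hcube_V :: "nat \<Rightarrow> bool list set" where
  "hcube_V n = {x. length x = n}"

definition hcube_adj :: "nat \<Rightarrow> bool list \<Rightarrow> bool list \<Rightarrow> bool" where
  "hcube_adj n x y \<longleftrightarrow> length x = n \<and> length y = n \<and> card {i. i < n \<and> x ! i \<noteq> y ! i} = 1"

definition S_lev :: "nat \<Rightarrow> nat \<Rightarrow> bool list list" where
  "S_lev n i = sorted_list_of_set {x. length x = n \<and> weight x = i}"

definition R_lev :: "nat \<Rightarrow> nat \<Rightarrow> bool list list" where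
  "R_lev n i = rev (S_lev n i)"

text \<open>The sequence S_n.  Even n: R^1,R^3,...,R^{n-1},S^n,S^{n-2},...,S^0.
  Odd n: R^1,R^3,...,R^n,S^{n-1},...,S^0.\<close>
definition seq_S :: "nat \<Rightarrow> bool list list" where
  "seq_S n = (if even n
     then concat (map (\<lambda>k. R_lev n (2*k+1)) [0..<n div 2])
          @ concat (map (\<lambda>k. S_lev n (n - 2*k)) [0..<n div 2 + 1])
     else concat (map (\<lambda>k. R_lev n (2*k+1)) [0..<(n+1) div 2])
          @ concat (map (\<lambda>k. S_lev n (n - 1 - 2*k)) [0..<(n+1) div 2]))"

definition f_lab :: "nat \<Rightarrow> bool list \<Rightarrow> nat" where
  "f_lab n x = (THE j. 1 \<le> j \<and> j \<le> length (seq_S n) \<and> seq_S n ! (j - 1) = x)"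

definition strength :: "bool list set \<Rightarrow> (bool list \<Rightarrow> bool list \<Rightarrow> bool) \<Rightarrow> (bool list \<Rightarrow> nat) \<Rightarrow> nat" where
  "strength V E f = Max {f u + f v | u v. u \<in> V \<and> v \<in> V \<and> E u v}"

abbreviation str_Q :: "nat \<Rightarrow> nat" where
  "str_Q n \<equiv> strength (hcube_V n) (hcube_adj n) (f_lab n)"

end

theory Submission
  imports Defs
begin

lemma weight_Nil[simp]: "weight [] = 0" by (simp add: weight_def)
lemma weight_Cons[simp]: "weight (a # u) = (if a then Suc (weight u) else weight u)"
  by (simp add: weight_def)

lemma lists_Suc_split:
  "{u. length u = Suc m \<and> P u} = (\<lambda>u. True # u) ` {u. length u = m \<and> P (True # u)}
     \<union> (\<lambda>u. False # u) ` {u. length u = m \<and> P (False # u)}"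
proof (rule set_eqI, rule iffI)
  fix u assume "u \<in> {u. length u = Suc m \<and> P u}"
  then obtain a v where u: "u = a # v" "length v = m" "P u" by (auto simp: length_Suc_conv)
  then show "u \<in> (\<lambda>u. True # u) ` {u. length u = m \<and> P (True # u)}
     \<union> (\<lambda>u. False # u) ` {u. length u = m \<and> P (False # u)}" by (cases a) auto
qed auto

lemma card_weight_sum:
  "card {u. length u = m \<and> P (weight u)} = (\<Sum>j\<le>m. (if P j then m choose j else 0))"
proof (induction m arbitrary: P)
  case 0
  have "{u::bool list. length u = 0 \<and> P (weight u)} = (if P 0 then {[]} else {})" by auto
  then show ?case by simp
next
  case (Suc m)
  have fin: "finite {u::bool list. length u = m \<and> Q u}" for Q
    by (rule finite_subset[OF _ finite_lists_length_eq[of "UNIV::bool set" m]]) auto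
  have "card {u. length u = Suc m \<and> P (weight u)} =
        card ((\<lambda>u. True # u) ` {u. length u = m \<and> P (Suc (weight u))})
      + card ((\<lambda>u. False # u) ` {u. length u = m \<and> P (weight u)})"
    by (subst lists_Suc_split, subst card_Un_disjoint) (auto intro: fin)
  also have "\<dots> = card {u. length u = m \<and> P (Suc (weight u))} + card {u. length u = m \<and> P (weight u)}"
    by (simp add: card_image)
  also have "\<dots> = (\<Sum>j\<le>m. (if P (Suc j) then m choose j else 0)) + (\<Sum>j\<le>m. (if P j then m choose j else 0))"
    using Suc by simp
  also have "\<dots> = (\<Sum>j\<le>Suc m. (if P j then Suc m choose j else 0))"
  proof -
    have "(\<Sum>j\<le>Suc m. (if P j then Suc m choose j else 0))
       = (if P 0 then 1 else 0) + (\<Sum>j\<le>m. (if P (Suc j) then (m choose j) + (m choose Suc j) else 0))"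
      by (subst sum.atMost_Suc_shift) (auto intro!: sum.cong)
    also have "\<dots> = (\<Sum>j\<le>m. (if P (Suc j) then m choose j else 0)) +
       ((if P 0 then 1 else 0) + (\<Sum>j\<le>m. (if P (Suc j) then m choose Suc j else 0)))"
      by (auto simp add: sum.distrib[symmetric] intro!: sum.cong)
    also have "(if P 0 then 1 else 0) + (\<Sum>j\<le>m. (if P (Suc j) then m choose Suc j else 0))
       = (\<Sum>j\<le>Suc m. (if P j then m choose j else 0))"
      by (subst sum.atMost_Suc_shift) simp
    also have "\<dots> = (\<Sum>j\<le>m. (if P j then m choose j else 0))" by simp
    finally show ?thesis by simp
  qed
  finally show ?case .
qed

lemma fin_lists: "finite {u::bool list. length u = m \<and> Q u}"
  by (rule finite_subset[OF _ finite_lists_length_eq[of "UNIV::bool set" m]]) auto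

lemma lists_SS_split:
  "{u. length u = Suc (Suc m) \<and> take 2 u \<noteq> [True,True] \<and> P (weight u)} =
     (\<lambda>v. False # False # v) ` {v. length v = m \<and> P (weight v)}
   \<union> ((\<lambda>v. False # True # v) ` {v. length v = m \<and> P (Suc (weight v))}
   \<union> (\<lambda>v. True # False # v) ` {v. length v = m \<and> P (Suc (weight v))})"
proof (rule set_eqI, rule iffI)
  fix u assume "u \<in> {u. length u = Suc (Suc m) \<and> take 2 u \<noteq> [True,True] \<and> P (weight u)}"
  then obtain a b v where u: "u = a # b # v" "length v = m" "P (weight u)" "\<not>(a \<and> b)"
    by (auto simp: length_Suc_conv numeral_2_eq_2)
  then show "u \<in> (\<lambda>v. False # False # v) ` {v. length v = m \<and> P (weight v)}
   \<union> ((\<lambda>v. False # True # v) ` {v. length v = m \<and> P (Suc (weight v))}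
   \<union> (\<lambda>v. True # False # v) ` {v. length v = m \<and> P (Suc (weight v))})"
    by (cases a; cases b) auto
qed (auto simp: numeral_2_eq_2)

lemma card_SS:
  "card {u. length u = Suc (Suc m) \<and> take 2 u \<noteq> [True,True] \<and> P (weight u)} =
   (\<Sum>j\<le>m. ((if P j then 1 else 0) + 2 * (if P (Suc j) then 1 else 0)) * (m choose j))"
proof -
  have "card {u. length u = Suc (Suc m) \<and> take 2 u \<noteq> [True,True] \<and> P (weight u)} =
     card ((\<lambda>v. False # False # v) ` {v. length v = m \<and> P (weight v)})
   + (card ((\<lambda>v. False # True # v) ` {v. length v = m \<and> P (Suc (weight v))})
   + card ((\<lambda>v. True # False # v) ` {v. length v = m \<and> P (Suc (weight v))}))"
    unfolding lists_SS_split
  proof (subst card_Un_disjoint)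
    show "finite ((\<lambda>v. False # False # v) ` {v. length v = m \<and> P (weight v)})"
      by (rule finite_imageI[OF fin_lists])
    show "finite ((\<lambda>v. False # True # v) ` {v. length v = m \<and> P (Suc (weight v))}
   \<union> (\<lambda>v. True # False # v) ` {v. length v = m \<and> P (Suc (weight v))})"
      by (intro finite_UnI finite_imageI fin_lists)
    show "(\<lambda>v. False # False # v) ` {v. length v = m \<and> P (weight v)} \<inter>
     ((\<lambda>v. False # True # v) ` {v. length v = m \<and> P (Suc (weight v))}
   \<union> (\<lambda>v. True # False # v) ` {v. length v = m \<and> P (Suc (weight v))}) = {}" by blast
    show "card ((\<lambda>v. False # False # v) ` {v. length v = m \<and> P (weight v)}) +
      card ((\<lambda>v. False # True # v) ` {v. length v = m \<and> P (Suc (weight v))}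
   \<union> (\<lambda>v. True # False # v) ` {v. length v = m \<and> P (Suc (weight v))}) =
     card ((\<lambda>v. False # False # v) ` {v. length v = m \<and> P (weight v)})
   + (card ((\<lambda>v. False # True # v) ` {v. length v = m \<and> P (Suc (weight v))})
   + card ((\<lambda>v. True # False # v) ` {v. length v = m \<and> P (Suc (weight v))}))"
      apply (subst card_Un_disjoint)
         apply (rule finite_imageI[OF fin_lists])
        apply (rule finite_imageI[OF fin_lists])
       apply blast
      apply (rule refl)
      done
  qed
  also have "\<dots> = card {v. length v = m \<and> P (weight v)} + 2 * card {v. length v = m \<and> P (Suc (weight v))}"
    by (simp add: card_image inj_on_def)
  also have "\<dots> = (\<Sum>j\<le>m. ((if P j then 1 else 0) + 2 * (if P (Suc j) then 1 else 0)) * (m choose j))"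
    unfolding card_weight_sum[of m P] card_weight_sum[of m "\<lambda>j. P (Suc j)"]
    by (simp only: sum_distrib_left sum.distrib[symmetric], rule sum.cong) auto
  finally show ?thesis .
qed

definition prec :: "bool list \<Rightarrow> bool list \<Rightarrow> bool" where
  "prec u z \<longleftrightarrow> (odd (weight u) \<and> even (weight z))
     \<or> (odd (weight u) \<and> odd (weight z) \<and> (weight u < weight z \<or> weight u = weight z \<and> z < u))
     \<or> (even (weight u) \<and> even (weight z) \<and> (weight z < weight u \<or> weight u = weight z \<and> u < z))"

lemma prec_irrefl: "\<not> prec u u" unfolding prec_def by simp
lemma prec_asym: "prec u z \<Longrightarrow> \<not> prec z u"
  unfolding prec_def using less_not_sym[of u z] less_not_sym[of z u] by linarith

lemma sorted_wrt_irrefl_distinct: "sorted_wrt R xs \<Longrightarrow> (\<And>x. \<not> R x x) \<Longrightarrow> distinct xs"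
  by (induction xs) auto

lemma index_card:
  assumes d: "distinct xs" and s: "sorted_wrt R xs" and irr: "\<And>x. \<not> R x x"
    and asy: "\<And>x y. R x y \<Longrightarrow> \<not> R y x" and k: "k < length xs"
  shows "card {u \<in> set xs. R u (xs ! k)} = k"
proof -
  have "{u \<in> set xs. R u (xs ! k)} = (\<lambda>i. xs ! i) ` {..<k}"
  proof (rule set_eqI, rule iffI)
    fix u assume "u \<in> {u \<in> set xs. R u (xs ! k)}"
    then obtain i where i: "i < length xs" "u = xs ! i" "R u (xs ! k)" by (auto simp: in_set_conv_nth)
    have "i < k"
    proof (rule ccontr)
      assume "\<not> i < k"
      then consider "i = k" | "k < i" by linarith
      then show False
      proof cases
        case 1 then show False using i irr by auto
      next
        case 2 then have "R (xs ! k) (xs ! i)" using s i by (simp add: sorted_wrt_iff_nth_less)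
        then show False using i asy by auto
      qed
    qed
    then show "u \<in> (\<lambda>i. xs ! i) ` {..<k}" using i by auto
  next
    fix u assume "u \<in> (\<lambda>i. xs ! i) ` {..<k}"
    then obtain i where "i < k" "u = xs ! i" by auto
    then show "u \<in> {u \<in> set xs. R u (xs ! k)}" using s k by (auto simp: sorted_wrt_iff_nth_less)
  qed
  moreover have "inj_on (\<lambda>i. xs ! i) {..<k}" using d k by (auto simp: inj_on_def nth_eq_iff_index_eq)
  ultimately show ?thesis by (simp add: card_image)
qed

lemma sorted_wrt_concat_upt:
  assumes "\<And>i. i < k \<Longrightarrow> sorted_wrt R (g i)"
    and "\<And>i j a b. i < j \<Longrightarrow> j < k \<Longrightarrow> a \<in> set (g i) \<Longrightarrow> b \<in> set (g j) \<Longrightarrow> R a b"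
  shows "sorted_wrt R (concat (map g [0..<k]))"
  using assms
proof (induction k)
  case 0 then show ?case by simp
next
  case (Suc k)
  then show ?case by (auto simp: sorted_wrt_append)
qed

lemma weight_le: "weight u \<le> length u"
  by (simp add: weight_def)

lemma fin_level: "finite {x::bool list. length x = n \<and> weight x = i}"
  using fin_lists by auto

lemma set_S_lev[simp]: "set (S_lev n i) = {x. length x = n \<and> weight x = i}"
  by (simp add: S_lev_def fin_level)

lemma set_R_lev[simp]: "set (R_lev n i) = {x. length x = n \<and> weight x = i}"
  by (simp add: R_lev_def)

lemma sorted_S_lev: "sorted_wrt (<) (S_lev n i)"
  by (simp add: S_lev_def)

lemma sorted_R_lev: "sorted_wrt (\<lambda>x y. y < x) (R_lev n i)"
  by (simp add: R_lev_def sorted_wrt_rev sorted_S_lev)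

lemma seq_even: "even n \<Longrightarrow> seq_S n = concat (map (\<lambda>k. R_lev n (2*k+1)) [0..<n div 2])
          @ concat (map (\<lambda>k. S_lev n (n - 2*k)) [0..<n div 2 + 1])"
  by (simp add: seq_S_def)

lemma seq_sorted:
  assumes "even n" shows "sorted_wrt prec (seq_S n)"
proof -
  have A: "sorted_wrt prec (concat (map (\<lambda>k. R_lev n (2*k+1)) [0..<n div 2]))"
  proof (rule sorted_wrt_concat_upt)
    fix i assume "i < n div 2"
    show "sorted_wrt prec (R_lev n (2*i+1))"
      using sorted_R_lev[of n "2*i+1"]
      by (rule sorted_wrt_mono_rel[rotated]) (auto simp: prec_def)
  qed (auto simp: prec_def)
  have B: "sorted_wrt prec (concat (map (\<lambda>k. S_lev n (n - 2*k)) [0..<n div 2 + 1]))"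
  proof (rule sorted_wrt_concat_upt)
    fix i assume "i < n div 2 + 1"
    show "sorted_wrt prec (S_lev n (n - 2*i))"
      using sorted_S_lev[of n "n - 2*i"]
      by (rule sorted_wrt_mono_rel[rotated]) (use assms in \<open>auto simp: prec_def\<close>)
  next
    fix i j a b assume "i < j" "j < n div 2 + 1" "a \<in> set (S_lev n (n - 2 * i))" "b \<in> set (S_lev n (n - 2 * j))"
    then show "prec a b" using assms by (auto simp: prec_def)
  qed
  show ?thesis using A B assms by (auto simp: seq_even sorted_wrt_append prec_def)
qed

lemma seq_set:
  assumes "even n" shows "set (seq_S n) = {u. length u = n}"
proof (rule set_eqI, rule iffI)
  fix u assume "u \<in> set (seq_S n)" then show "u \<in> {u. length u = n}"
    using assms by (auto simp: seq_even)
next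
  fix u :: "bool list" assume u: "u \<in> {u. length u = n}"
  have w: "weight u \<le> n" using u weight_le by auto
  show "u \<in> set (seq_S n)"
  proof (cases "odd (weight u)")
    case True
    then obtain k where k: "weight u = 2*k+1" by (metis oddE)
    with w assms have "k < n div 2" by presburger
    then show ?thesis using u k assms by (auto simp: seq_even)
  next
    case False
    define k where "k = (n - weight u) div 2"
    have k: "weight u = n - 2*k" "k < n div 2 + 1" using False w assms unfolding k_def by presburger+
    have "u \<in> set (S_lev n (n - 2*k))" using u k by simp
    then have "u \<in> set (concat (map (\<lambda>k. S_lev n (n - 2*k)) [0..<n div 2 + 1]))"
      using k(2) by (simp del: set_S_lev upt_Suc) (metis atLeastLessThan_iff zero_le)
    then show ?thesis using assms by (simp only: seq_even set_append) blast
  qed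
qed

lemma f_lab_eq:
  assumes "even n" "length z = n"
  shows "f_lab n z = card {u. length u = n \<and> prec u z} + 1"
proof -
  let ?xs = "seq_S n"
  have d: "distinct ?xs" using seq_sorted[OF assms(1)] prec_irrefl by (rule sorted_wrt_irrefl_distinct)
  have "z \<in> set ?xs" using seq_set[OF assms(1)] assms(2) by auto
  then obtain k where k: "k < length ?xs" "?xs ! k = z" by (auto simp: in_set_conv_nth)
  have c: "card {u \<in> set ?xs. prec u z} = k"
    using index_card[OF d seq_sorted[OF assms(1)] prec_irrefl prec_asym k(1)] k(2) by simp
  have "f_lab n z = k + 1"
    unfolding f_lab_def
  proof (rule the_equality)
    show "1 \<le> k + 1 \<and> k + 1 \<le> length ?xs \<and> ?xs ! (k + 1 - 1) = z" using k by auto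
  next
    fix j assume j: "1 \<le> j \<and> j \<le> length ?xs \<and> ?xs ! (j - 1) = z"
    then have "j - 1 = k" using d k by (metis Suc_le_eq le_add_diff_inverse2 nth_eq_iff_index_eq Suc_eq_plus1)
    then show "j = k + 1" using j by auto
  qed
  moreover have "{u \<in> set ?xs. prec u z} = {u. length u = n \<and> prec u z}" using seq_set[OF assms(1)] by auto
  ultimately show ?thesis using c by simp
qed

definition Q :: "nat \<Rightarrow> nat \<Rightarrow> bool" where
  "Q w j = (if odd w then odd j \<and> j < w + 2 else odd j \<or> (even j \<and> w + 2 \<le> j))"

definition cf :: "nat \<Rightarrow> nat \<Rightarrow> nat" where
  "cf w j = (if Q w j then 1 else 0) + 2 * (if Q w (Suc j) then 1 else 0)"

lemma lt_TT:
  assumes "length u = Suc (Suc m)" "take 2 u \<noteq> [True, True]"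
  shows "u < True # True # z"
proof -
  obtain a b v where u: "u = a # b # v" using assms(1) by (auto simp: length_Suc_conv)
  show ?thesis using assms(2) unfolding u by (cases a; cases b) (auto simp: numeral_2_eq_2)
qed

lemma prec_TT: "prec (True # True # v) (True # True # z) \<longleftrightarrow> prec v z"
  by (auto simp: prec_def)

lemma f_TT:
  assumes "even m" "length z = m"
  shows "f_lab (Suc (Suc m)) (True # True # z) = f_lab m z + (\<Sum>j\<le>m. cf (weight z) j * (m choose j))"
proof -
  let ?z = "True # True # z"
  have e: "even (Suc (Suc m))" using assms by simp
  have split: "{u. length u = Suc (Suc m) \<and> prec u ?z} =
     (\<lambda>v. True # True # v) ` {v. length v = m \<and> prec v z}
     \<union> {u. length u = Suc (Suc m) \<and> take 2 u \<noteq> [True,True] \<and> Q (weight z) (weight u)}"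
  proof (rule set_eqI, rule iffI)
    fix u assume "u \<in> {u. length u = Suc (Suc m) \<and> prec u ?z}"
    then have u: "length u = Suc (Suc m)" "prec u ?z" by auto
    show "u \<in> (\<lambda>v. True # True # v) ` {v. length v = m \<and> prec v z}
     \<union> {u. length u = Suc (Suc m) \<and> take 2 u \<noteq> [True,True] \<and> Q (weight z) (weight u)}"
    proof (cases "take 2 u = [True, True]")
      case True
      then obtain v where "u = True # True # v" using u(1) by (auto simp: length_Suc_conv numeral_2_eq_2)
      then show ?thesis using u by (auto simp: prec_TT)
    next
      case False
      have "u < ?z" using lt_TT[OF u(1) False] .
      then have "\<not> ?z < u" "u \<noteq> ?z" by auto
      then show ?thesis using u False by (auto simp: prec_def Q_def)
    qed
  next
    fix u assume "u \<in> (\<lambda>v. True # True # v) ` {v. length v = m \<and> prec v z}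
     \<union> {u. length u = Suc (Suc m) \<and> take 2 u \<noteq> [True,True] \<and> Q (weight z) (weight u)}"
    then consider v where "u = True # True # v" "length v = m" "prec v z"
      | "length u = Suc (Suc m)" "take 2 u \<noteq> [True,True]" "Q (weight z) (weight u)" by auto
    then show "u \<in> {u. length u = Suc (Suc m) \<and> prec u ?z}"
    proof cases
      case 1 then show ?thesis by (simp add: prec_TT)
    next
      case 2
      have "u < ?z" using lt_TT[OF 2(1,2)] .
      then have "\<not> ?z < u" "u \<noteq> ?z" by auto
      then show ?thesis using 2 by (auto simp: prec_def Q_def split: if_splits)
    qed
  qed
  have "card {u. length u = Suc (Suc m) \<and> prec u ?z} =
     card ((\<lambda>v. True # True # v) ` {v. length v = m \<and> prec v z})
     + card {u. length u = Suc (Suc m) \<and> take 2 u \<noteq> [True,True] \<and> Q (weight z) (weight u)}"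
    unfolding split by (rule card_Un_disjoint) (auto intro: fin_lists simp: numeral_2_eq_2)
  also have "\<dots> = card {v. length v = m \<and> prec v z} + (\<Sum>j\<le>m. cf (weight z) j * (m choose j))"
    by (simp add: card_image inj_on_def card_SS cf_def)
  finally show ?thesis using f_lab_eq[OF e] f_lab_eq[OF assms] assms(2) by simp
qed

lemma alt_sum:
  "(\<Sum>j\<le>w. (if even j then 1 else -1) * int (Suc m choose j)) = (if even w then 1 else -1) * int (m choose w)"
proof (induction w)
  case 0 then show ?case by simp
next
  case (Suc w)
  then show ?case by (auto simp: algebra_simps)
qed

lemma cf_sum: "int (cf w j) + int (cf (Suc w) j) =
   3 + (if j \<le> w then (if even j then 1 else -1) else 0) + (if j = Suc w then (if even w then 1 else -1) else 0)"
  unfolding cf_def Q_def by (cases "even w"; cases "even j") (auto, presburger+)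

lemma D_sum:
  assumes "Suc w \<le> Suc m"
  shows "int (\<Sum>j\<le>Suc m. cf w j * (Suc m choose j)) + int (\<Sum>j\<le>Suc m. cf (Suc w) j * (Suc m choose j))
    = 3 * 2 ^ Suc m + (if even w then 1 else -1) * (int (m choose w) + int (Suc m choose Suc w))"
proof -
  let ?M = "Suc m"
  have "int (\<Sum>j\<le>?M. cf w j * (?M choose j)) + int (\<Sum>j\<le>?M. cf (Suc w) j * (?M choose j))
     = (\<Sum>j\<le>?M. (int (cf w j) + int (cf (Suc w) j)) * int (?M choose j))"
    by (simp add: sum.distrib algebra_simps)
  also have "\<dots> = (\<Sum>j\<le>?M. 3 * int (?M choose j))
       + (\<Sum>j\<le>?M. (if j \<le> w then (if even j then 1 else -1) * int (?M choose j) else 0))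
       + (\<Sum>j\<le>?M. (if j = Suc w then (if even w then 1 else -1) * int (?M choose j) else 0))"
    unfolding sum.distrib[symmetric] by (rule sum.cong) (simp_all add: cf_sum algebra_simps)
  also have "(\<Sum>j\<le>?M. 3 * int (?M choose j)) = 3 * 2 ^ ?M"
    using choose_row_sum[of ?M] by (simp add: sum_distrib_left[symmetric] flip: of_nat_sum)
  also have "(\<Sum>j\<le>?M. (if j \<le> w then (if even j then 1 else -1) * int (?M choose j) else 0))
      = (\<Sum>j\<le>w. (if even j then 1 else -1) * int (?M choose j))"
  proof -
    have "{..?M} \<inter> {j. j \<le> w} = {..w}" using assms by auto
    moreover have "(\<Sum>j\<le>?M. (if j \<le> w then (if even j then 1 else -1) * int (?M choose j) else 0))
      = (\<Sum>j\<in>{..?M} \<inter> {j. j \<le> w}. (if even j then 1 else -1) * int (?M choose j))"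
      by (subst sum.inter_restrict) auto
    ultimately show ?thesis by simp
  qed
  also have "\<dots> = (if even w then 1 else -1) * int (m choose w)" by (rule alt_sum)
  also have "(\<Sum>j\<le>?M. (if j = Suc w then (if even w then 1 else -1) * int (?M choose j) else 0))
      = (if even w then 1 else -1) * int (?M choose Suc w)"
    using assms by (simp add: sum.delta)
  finally show ?thesis by (simp add: algebra_simps)
qed

lemma weight_card: "weight u = card {i. i < length u \<and> u ! i}"
  by (simp add: weight_def length_filter_conv_card)

lemma adj_weight:
  assumes "length u = length v" "card {i. i < length u \<and> u ! i \<noteq> v ! i} = 1"
  shows "weight u = Suc (weight v) \<or> weight v = Suc (weight u)"
proof -
  let ?L = "length u"
  obtain i0 where i0: "{i. i < ?L \<and> u ! i \<noteq> v ! i} = {i0}" using assms(2) card_1_singletonE by blast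
  then have i0L: "i0 < ?L" "u ! i0 \<noteq> v ! i0" by auto
  have eq: "\<And>i. i < ?L \<Longrightarrow> i \<noteq> i0 \<Longrightarrow> u ! i = v ! i" using i0 by blast
  let ?A = "{i. i < ?L \<and> u ! i}" and ?B = "{i. i < ?L \<and> v ! i}"
  have wu: "weight u = card ?A" by (rule weight_card)
  have wv: "weight v = card ?B" using assms(1) by (simp add: weight_card)
  show ?thesis
  proof (cases "u ! i0")
    case True
    then have "?A = insert i0 ?B" "i0 \<notin> ?B" using i0L eq by auto
    then have "card ?A = Suc (card ?B)" by simp
    then show ?thesis using wu wv by simp
  next
    case False
    then have "?B = insert i0 ?A" "i0 \<notin> ?A" using i0L eq by auto
    then have "card ?B = Suc (card ?A)" by simp
    then show ?thesis using wu wv by simp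
  qed
qed

lemma str_ge:
  assumes "u \<in> hcube_V m" "v \<in> hcube_V m" "hcube_adj m u v"
  shows "f_lab m u + f_lab m v \<le> str_Q m"
proof -
  have fin: "finite (hcube_V m)" unfolding hcube_V_def using fin_lists[of m "\<lambda>_. True"] by simp
  have "{f_lab m u + f_lab m v |u v. u \<in> hcube_V m \<and> v \<in> hcube_V m \<and> hcube_adj m u v}
     \<subseteq> (\<lambda>(u,v). f_lab m u + f_lab m v) ` (hcube_V m \<times> hcube_V m)" by auto
  then have "finite {f_lab m u + f_lab m v |u v. u \<in> hcube_V m \<and> v \<in> hcube_V m \<and> hcube_adj m u v}"
    using fin by (meson finite_SigmaI finite_imageI finite_subset)
  then show ?thesis unfolding strength_def using assms by (intro Max_ge) blast+
qed

lemma bm: "n choose k \<le> n choose (n div 2)" by (rule binomial_maximum)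

lemma ceil_half: "nat \<lceil>real (2 * t - 1) / 2\<rceil> = t" if "t \<ge> 1" for t :: nat
proof -
  have "real (2 * t - 1) / 2 = real t - 1/2" using that by (simp add: of_nat_diff field_simps)
  moreover have "\<lceil>real t - 1/2\<rceil> = int t" by (rule ceiling_unique) simp_all
  ultimately show ?thesis by (metis nat_int)
qed

theorem theorem2p6:
  fixes n :: nat and x y :: "bool list"
  assumes "n \<ge> 5" and "even n"
    and "x \<in> hcube_V n" and "y \<in> hcube_V n" and "hcube_adj n x y"
    and "f_lab n x + f_lab n y = str_Q n"
    and "take 2 x = [True, True]" and "take 2 y = [True, True]"
  shows "str_Q n \<le> str_Q (n - 2) + 3 * 2 ^ (n - 2)
           + ((n - 3) choose (nat \<lceil>real (n - 3) / 2\<rceil>))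
           + ((n - 2) choose (nat \<lceil>real (n - 2) / 2\<rceil>))"
proof -
  obtain t where t: "n = 2 * t" using assms(2) by blast
  have t3: "t \<ge> 3" using t assms(1) by linarith
  define k where "k = 2 * t - 3"
  define m where "m = Suc k"
  have nm: "n = Suc (Suc m)" and m2: "n - 2 = m" and k3: "n - 3 = k" using t t3 unfolding m_def k_def by auto
  have em: "even m" using nm assms(2) by simp
  have lx: "length x = Suc (Suc m)" "length y = Suc (Suc m)" using assms(3,4) nm by (auto simp: hcube_V_def)
  obtain x' where x': "x = True # True # x'" "length x' = m"
    using lx(1) assms(7) by (auto simp: length_Suc_conv numeral_2_eq_2)
  obtain y' where y': "y = True # True # y'" "length y' = m"
    using lx(2) assms(8) by (auto simp: length_Suc_conv numeral_2_eq_2)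
  have "{i. i < n \<and> x ! i \<noteq> y ! i} = (\<lambda>i. Suc (Suc i)) ` {i. i < m \<and> x' ! i \<noteq> y' ! i}"
  proof (rule set_eqI, rule iffI)
    fix i assume "i \<in> {i. i < n \<and> x ! i \<noteq> y ! i}"
    then have i: "i < n" "x ! i \<noteq> y ! i" by auto
    have "i \<noteq> 0" using i(2) x'(1) y'(1) by (metis nth_Cons_0)
    have "i \<noteq> 1" using i(2) x'(1) y'(1) by (metis One_nat_def nth_Cons_0 nth_Cons_Suc)
    then obtain j where j: "i = Suc (Suc j)" using \<open>i \<noteq> 0\<close> by (metis One_nat_def not0_implies_Suc)
    have "j < m" "x' ! j \<noteq> y' ! j" using i x'(1) y'(1) nm j by simp_all
    then show "i \<in> (\<lambda>i. Suc (Suc i)) ` {i. i < m \<and> x' ! i \<noteq> y' ! i}" using j by blast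
  next
    fix i assume "i \<in> (\<lambda>i. Suc (Suc i)) ` {i. i < m \<and> x' ! i \<noteq> y' ! i}"
    then obtain j where j: "i = Suc (Suc j)" "j < m" "x' ! j \<noteq> y' ! j" by blast
    then show "i \<in> {i. i < n \<and> x ! i \<noteq> y ! i}" using x'(1) y'(1) nm by simp
  qed
  then have "card {i. i < m \<and> x' ! i \<noteq> y' ! i} = 1"
    using assms(5) by (simp add: hcube_adj_def card_image inj_on_def)
  then have adj': "hcube_adj m x' y'" using x' y' by (simp add: hcube_adj_def)
  have le: "f_lab m x' + f_lab m y' \<le> str_Q m"
    by (rule str_ge) (use x' y' adj' in \<open>auto simp: hcube_V_def\<close>)
  have wd: "weight x' = Suc (weight y') \<or> weight y' = Suc (weight x')"
    using adj_weight[of x' y'] adj' x' y' by (simp add: hcube_adj_def)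
  define D where "D z = (\<Sum>j\<le>m. cf (weight z) j * (m choose j))" for z
  have fx: "f_lab n x = f_lab m x' + D x'" using f_TT[OF em x'(2)] x'(1) nm D_def by simp
  have fy: "f_lab n y = f_lab m y' + D y'" using f_TT[OF em y'(2)] y'(1) nm D_def by simp
  have key: "int (D x' + D y') \<le> 3 * 2 ^ m + int (k choose (k div 2)) + int (m choose (m div 2))"
  proof -
    obtain w where w: "(weight x' = w \<and> weight y' = Suc w) \<or> (weight y' = w \<and> weight x' = Suc w)"
      using wd by blast
    have wm: "Suc w \<le> Suc k" using w weight_le[of x'] weight_le[of y'] x' y' m_def by auto
    have "int (D x' + D y') = int (\<Sum>j\<le>Suc k. cf w j * (Suc k choose j)) + int (\<Sum>j\<le>Suc k. cf (Suc w) j * (Suc k choose j))"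
      using w unfolding D_def m_def by auto
    also have "\<dots> = 3 * 2 ^ Suc k + (if even w then 1 else -1) * (int (k choose w) + int (Suc k choose Suc w))"
      by (rule D_sum[OF wm])
    also have "\<dots> \<le> 3 * 2 ^ m + int (k choose (k div 2)) + int (m choose (m div 2))"
    proof (cases "even w")
      case True
      then show ?thesis using binomial_maximum[of k w] binomial_maximum[of m "Suc w"] unfolding m_def by simp
    next
      case False
      then show ?thesis unfolding m_def by simp
    qed
    finally show ?thesis .
  qed
  have mt: "m = 2 * (t - 1)" using t3 unfolding m_def k_def by linarith
  have kt: "k = 2 * (t - 2) + 1" using t3 unfolding k_def by linarith
  have md: "m div 2 = t - 1" using mt by simp
  have kd: "k div 2 = t - 2" using kt by simp
  have kk: "k choose (t - 2) = k choose (t - 1)"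
  proof -
    have "t - 2 \<le> k" "k - (t - 2) = t - 1" using kt t3 by linarith+
    then show ?thesis using binomial_symmetric by metis
  qed
  have c1: "nat \<lceil>real (n - 3) / 2\<rceil> = t - 1"
  proof -
    have "n - 3 = 2 * (t - 1) - 1" "t - 1 \<ge> 1" using k3 kt t3 by linarith+
    then show ?thesis using ceil_half[of "t - 1"] by simp
  qed
  have c2: "nat \<lceil>real (n - 2) / 2\<rceil> = t - 1"
  proof -
    have "real (n - 2) / 2 = real (t - 1)" using m2 mt by simp
    then show ?thesis by simp
  qed
  have "int (str_Q n) = int (f_lab m x' + f_lab m y') + int (D x' + D y')"
    using assms(6) fx fy by simp
  also have "\<dots> \<le> int (str_Q m) + (3 * 2 ^ m + int (k choose (t - 1)) + int (m choose (t - 1)))"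
    using le key unfolding kd md kk by linarith
  finally have "int (str_Q n) \<le> int (str_Q m + 3 * 2 ^ m + (k choose (t - 1)) + (m choose (t - 1)))"
    by simp
  then have "str_Q n \<le> str_Q m + 3 * 2 ^ m + (k choose (t - 1)) + (m choose (t - 1))"
    by (simp only: of_nat_le_iff)
  moreover have "nat \<lceil>real k / 2\<rceil> = t - 1" using c1 k3 by simp
  moreover have "nat \<lceil>real m / 2\<rceil> = t - 1" using c2 m2 by simp
  ultimately show ?thesis unfolding m2 k3 by simp
qed

end
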